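(* Let $A:\mathbb{R}^n\to\mathbb{R}^n$ be a nonsingular linear operator that is generalized sign-regular (GSR) with respect to a totally positive structure $\{K_1,\ldots,K_n\}$. Then for every $j=1,\ldots,n$: $$A(\widehat{T}(K_j))\subseteq\widehat{T}(K_j)\qquad\text{and}\qquad A(\widehat{T}(K_1,\ldots,K_j))\subseteq\widehat{T}(K_1,\ldots,K_j).$$
   Context: A proper cone is a closed convex cone that is pointed and solid. $\wedge^j\mathbb{R}^n$ is the $j$th exterior power of $\mathbb{R}^n$; $\wedge^jA$ is the operator on it with $(\wedge^jA)(x_1\wedge\cdots\wedge x_j)=Ax_1\wedge\cdots\wedge Ax_j$. A linear operator $B$ is $K$-nonnegative if $BK\subseteq K$. A totally positive structure is a family $\{K_1,\ldots,K_n\}$, $K_j\subset\wedge^j\mathbb{R}^n$ a proper cone; $A$ is GSR with respect to it if there are $\epsilon_1,\ldots,\epsilon_n\in\{\pm1\}$ with $\epsilon_j\wedge^jA$ being $K_j$-nonnegative for each $j$. Define $\widehat{T}(K_1)=K_1\cup(-K_1)$; for $j\ge2$, $\widehat{T}(K_j)$ is the set of all $x_1\in\mathbb{R}^n$ for which there exist $x_2,\ldots,x_j\in\mathbb{R}^n$ with $x_1\wedge\cdots\wedge x_j\in(K_j\cup(-K_j))\setminus\{0\}$, together with $0$; and $\widehat{T}(K_1,\ldots,K_j)$ is the closure of the set of all $x_1\in\mathbb{R}^n$ for which there exist $x_2\in\widehat{T}(K_1)\setminus\{0\},\ldots,x_j\in\widehat{T}(K_1,\ldots,K_{j-1})\setminus\{0\}$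 with $x_1\wedge\cdots\wedge x_j\in(K_j\cup(-K_j))\setminus\{0\}$. *)

theory Defs
  imports "HOL-Analysis.Analysis"
begin

text \<open>Concrete model: R^n is real^('n::{finite,linorder}); the exterior power wedge^j R^n is the subspace
 of real^(('n::{finite,linorder}) set) of vectors supported on j-element index sets I (basis e_I,
 I = {i_1 < ... < i_j}).\<close>

definition ext_space :: "nat \<Rightarrow> (real ^ (('n::{finite,linorder}) set)) set" where
  "ext_space j = {w. \<forall>I. card I \<noteq> j \<longrightarrow> w $ I = 0}"

definition wedge :: "(real ^ (('n::{finite,linorder}))) list \<Rightarrow> real ^ (('n::{finite,linorder}) set)" where
  "wedge xs = (\<chi> I. if card I = length xs then
      (\<Sum>p\<in>{p. p permutes {..<length xs}}. sign p *
         (\<Prod>k<length xs. (xs ! k) $ (sorted_list_of_set I ! p k)))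
     else 0)"

definition ext_pow :: "nat \<Rightarrow> real ^ (('n::{finite,linorder})) ^ (('n::{finite,linorder})) \<Rightarrow> real ^ ((('n::{finite,linorder})) set) \<Rightarrow> real ^ ((('n::{finite,linorder})) set)" where
  "ext_pow j A w = (\<Sum>I\<in>{I. card I = j}.
       w $ I *\<^sub>R wedge (map (\<lambda>i. A *v axis i 1) (sorted_list_of_set I)))"

definition proper_cone :: "nat \<Rightarrow> (real ^ (('n::{finite,linorder}) set)) set \<Rightarrow> bool" where
  "proper_cone j K \<longleftrightarrow> K \<subseteq> ext_space j \<and> closed K \<and> convex K \<and> cone K \<and>
     K \<inter> uminus ` K \<subseteq> {0} \<and>
     (\<exists>x\<in>K. \<exists>e>0. ball x e \<inter> ext_space j \<subseteq> K)"

definition K_nonneg :: "(real ^ (('n::{finite,linorder}) set)) set \<Rightarrow> (real ^ (('n::{finite,linorder}) set) \<Rightarrow> real ^ (('n::{finite,linorder}) set)) \<Rightarrow> bool" where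
  "K_nonneg K B \<longleftrightarrow> B ` K \<subseteq> K"

definition TP_structure :: "(nat \<Rightarrow> (real ^ (('n::{finite,linorder}) set)) set) \<Rightarrow> bool" where
  "TP_structure K \<longleftrightarrow> (\<forall>j\<in>{1..CARD(('n::{finite,linorder}))}. proper_cone j (K j))"

definition GSR :: "(nat \<Rightarrow> (real ^ (('n::{finite,linorder}) set)) set) \<Rightarrow> real ^ ('n::{finite,linorder}) ^ ('n::{finite,linorder}) \<Rightarrow> bool" where
  "GSR K A \<longleftrightarrow> (\<exists>\<epsilon>::nat \<Rightarrow> real. \<forall>j\<in>{1..CARD(('n::{finite,linorder}))}.
      \<epsilon> j \<in> {-1, 1} \<and> K_nonneg (K j) (\<lambda>w. \<epsilon> j *\<^sub>R ext_pow j A w))"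

text \<open>T-hat(K_j), as a subset of R^n (K_1 is identified with a subset of R^n via x |-> wedge [x]).\<close>
definition That :: "(nat \<Rightarrow> (real ^ (('n::{finite,linorder}) set)) set) \<Rightarrow> nat \<Rightarrow> (real ^ ('n::{finite,linorder})) set" where
  "That K j = (if j = 1 then {x. wedge [x] \<in> K 1 \<union> uminus ` K 1}
     else {x. \<exists>xs. length xs = j - 1 \<and> wedge (x # xs) \<in> (K j \<union> uminus ` K j) - {0}} \<union> {0})"

text \<open>Tseq K j = T-hat(K_1,...,K_j); x_{i+2} = xs!i must lie in T-hat(K_1,...,K_{i+1}) minus 0.\<close>
function Tseq :: "(nat \<Rightarrow> (real ^ (('n::{finite,linorder}) set)) set) \<Rightarrow> nat \<Rightarrow> (real ^ ('n::{finite,linorder})) set" where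
  "Tseq K 0 = {}"
| "Tseq K (Suc 0) = That K 1"
| "Tseq K (Suc (Suc m)) = closure {x. \<exists>xs. length xs = Suc m \<and>
      (\<forall>i<Suc m. xs ! i \<in> Tseq K (Suc i) - {0}) \<and>
      wedge (x # xs) \<in> (K (Suc (Suc m)) \<union> uminus ` K (Suc (Suc m))) - {0}}"
  by pat_completeness auto
termination
  by (relation "Wellfounded.measure (\<lambda>(K, j). j)") auto

end

theory Submission
  imports Defs
begin

definition Dm :: "real^'n^'n \<Rightarrow> 'n list \<Rightarrow> nat \<Rightarrow> (nat \<Rightarrow> 'n) \<Rightarrow> real" where
  "Dm A sI j c = (\<Sum>p\<in>{p. p permutes {..<j}}. sign p * (\<Prod>k<j. A$(sI!p k)$(c k)))"

lemma Dm_cong: "(\<And>k. k<j \<Longrightarrow> c k = c' k) \<Longrightarrow> Dm A sI j c = Dm A sI j c'"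
  unfolding Dm_def by (intro sum.cong prod.cong refl) auto

lemma Dm_perm:
  assumes s: "s permutes {..<j}"
  shows "Dm A sI j (c \<circ> s) = sign s * Dm A sI j c"
proof -
  have "Dm A sI j (c \<circ> s) = (\<Sum>p\<in>{p. p permutes {..<j}}. sign (p \<circ> s) * (\<Prod>k<j. A$(sI!p (s k))$(c (s k))))"
    unfolding Dm_def by (subst sum_permutations_compose_right[OF s]) simp
  also have "\<dots> = (\<Sum>p\<in>{p. p permutes {..<j}}. sign s * (sign p * (\<Prod>k<j. A$(sI!p k)$(c k))))"
  proof (intro sum.cong refl)
    fix p assume p: "p \<in> {p. p permutes {..<j}}"
    have "sign (p \<circ> s) = sign p * sign s"
      by (rule sign_compose) (use p s permutation_permutes in auto)
    moreover have "(\<Prod>k<j. A$(sI!p (s k))$(c (s k))) = (\<Prod>k<j. A$(sI!p k)$(c k))"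
      using prod.reindex_bij_betw[OF permutes_imp_bij[OF s], of "\<lambda>k. A$(sI!p k)$(c k)"] by simp
    ultimately show "sign (p \<circ> s) * (\<Prod>k<j. A$(sI!p (s k))$(c (s k))) = sign s * (sign p * (\<Prod>k<j. A$(sI!p k)$(c k)))"
      by simp
  qed
  also have "\<dots> = sign s * Dm A sI j c" unfolding Dm_def by (simp add: sum_distrib_left)
  finally show ?thesis .
qed

lemma Dm_noninj:
  assumes "\<not> inj_on c {..<j}"
  shows "Dm A sI j c = 0"
proof -
  obtain a b where ab: "a < j" "b < j" "a \<noteq> b" "c a = c b"
    using assms unfolding inj_on_def by auto
  have t: "Transposition.transpose a b permutes {..<j}" using ab by (intro permutes_swap_id) auto
  have "c \<circ> Transposition.transpose a b = c" using ab by (auto simp: Transposition.transpose_def)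
  hence "Dm A sI j c = - Dm A sI j c"
    using Dm_perm[OF t, of A sI c] ab by (simp add: sign_swap_id)
  thus ?thesis by simp
qed


definition ix :: "'a list \<Rightarrow> 'a \<Rightarrow> nat" where
  "ix L y = the_inv_into {..<length L} (nth L) y"

lemma nth_img: "nth L ` {..<length L} = set L"
  by (auto simp: set_conv_nth)

lemma ix_nth: "distinct L \<Longrightarrow> k < length L \<Longrightarrow> ix L (L ! k) = k"
  unfolding ix_def by (rule the_inv_into_f_f) (auto intro: inj_on_nth)

lemma nth_ix: "distinct L \<Longrightarrow> y \<in> set L \<Longrightarrow> L ! ix L y = y"
  unfolding ix_def by (rule f_the_inv_into_f) (auto intro: inj_on_nth simp: nth_img)

lemma ix_less: "distinct L \<Longrightarrow> y \<in> set L \<Longrightarrow> ix L y < length L"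
  unfolding ix_def using the_inv_into_into[of "nth L" "{..<length L}" y "{..<length L}"]
  by (auto intro: inj_on_nth simp: nth_img)

lemma ix_inj: "distinct L \<Longrightarrow> y \<in> set L \<Longrightarrow> z \<in> set L \<Longrightarrow> ix L y = ix L z \<Longrightarrow> y = z"
  by (metis nth_ix)

lemma sum_inj_reindex:
  fixes F :: "(nat \<Rightarrow> 'n::{finite,linorder}) \<Rightarrow> real"
  shows "(\<Sum>g\<in>{g\<in>PiE {..<j} (\<lambda>_. UNIV::'n set). inj_on g {..<j}}. F g) =
    (\<Sum>J\<in>{J::'n set. card J = j}. \<Sum>s\<in>{s. s permutes {..<j}}.
        F (restrict (\<lambda>k. sorted_list_of_set J ! s k) {..<j}))"
proof -
  let ?S = "{g\<in>PiE {..<j} (\<lambda>_. UNIV::'n set). inj_on g {..<j}}"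
  let ?T = "Sigma {J::'n set. card J = j} (\<lambda>_. {s. s permutes {..<j}})"
  let ?i = "\<lambda>(J::'n set, s). restrict (\<lambda>k. sorted_list_of_set J ! s k) {..<j}"
  let ?jj = "\<lambda>g::nat\<Rightarrow>'n. (g ` {..<j}, \<lambda>k. if k < j then ix (sorted_list_of_set (g ` {..<j})) (g k) else k)"
  have "(\<Sum>J\<in>{J::'n set. card J = j}. \<Sum>s\<in>{s. s permutes {..<j}}.
        F (restrict (\<lambda>k. sorted_list_of_set J ! s k) {..<j})) = (\<Sum>x\<in>?T. F (?i x))"
    by (subst sum.Sigma) (auto simp: finite_permutations split_def)
  also have "\<dots> = sum F ?S"
  proof -
  have A: "?i (?jj g) = g \<and> ?jj g \<in> ?T" if g: "g \<in> ?S" for g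
  proof -
    let ?L = "sorted_list_of_set (g ` {..<j})"
    have dl: "distinct ?L" "set ?L = g ` {..<j}" by auto
    have cj: "card (g ` {..<j}) = j" using g card_image[of g "{..<j}"] by auto
    have "?i (?jj g) = g"
    proof
      fix k show "?i (?jj g) k = g k"
        using g dl by (auto simp: nth_ix PiE_def extensional_def)
    qed
    have pj: "(\<lambda>k. if k < j then ix ?L (g k) else k) permutes {..<j}"
    proof (rule inj_imp_permutes)
      show "inj_on (\<lambda>k. if k < j then ix ?L (g k) else k) {..<j}"
        using g dl ix_inj[OF dl(1)] by (simp add: inj_on_def)
      show "\<And>x. x \<in> {..<j} \<Longrightarrow> (if x < j then ix ?L (g x) else x) \<in> {..<j}"
        using dl cj ix_less[OF dl(1)] by auto
    qed auto
    show ?thesis using cj pj \<open>?i (?jj g) = g\<close> by auto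
  qed
  have B: "?jj (?i b) = b \<and> ?i b \<in> ?S" if b: "b \<in> ?T" for b
  proof -
    obtain J s where bJ: "b = (J, s)" and cJ: "card J = j" and s: "s permutes {..<j}"
      using b by auto
    let ?L = "sorted_list_of_set J"
    have dl: "distinct ?L" "set ?L = J" "length ?L = j" using cJ by auto
    have sl: "\<And>k. k < j \<Longrightarrow> s k < j" using s permutes_in_image by fastforce
    have img: "(\<lambda>k. ?L ! s k) ` {..<j} = J"
    proof -
      have "(\<lambda>k. ?L ! s k) ` {..<j} = (nth ?L) ` (s ` {..<j})" by auto
      also have "\<dots> = (nth ?L) ` {..<j}" using permutes_image[OF s] by simp
      also have "\<dots> = J" using nth_img[of ?L] dl by simp
      finally show ?thesis .
    qed
    have img2: "restrict (\<lambda>k. ?L ! s k) {..<j} ` {..<j} = J" using img by auto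
    have e2: "(\<lambda>k. if k < j then ix ?L (restrict (\<lambda>k. ?L ! s k) {..<j} k) else k) = s"
    proof
      fix k show "(if k < j then ix ?L (restrict (\<lambda>k. ?L ! s k) {..<j} k) else k) = s k"
        using dl sl[of k] permutes_not_in[OF s, of k] by (auto simp: ix_nth)
    qed
    have 1: "?jj (?i b) = b" unfolding bJ split_conv img2 e2 by (rule refl)
    have si: "inj_on s {..<j}" using s permutes_inj_on by blast
    have "inj_on (\<lambda>k. ?L ! s k) {..<j}"
    proof (rule inj_onI)
      fix x y assume xy: "x \<in> {..<j}" "y \<in> {..<j}" "?L ! s x = ?L ! s y"
      hence "s x = s y" using nth_eq_iff_index_eq[OF dl(1)] dl(3) sl xy by simp
      thus "x = y" by (rule inj_onD[OF si _ xy(1,2)])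
    qed
    hence 2: "?i b \<in> ?S" unfolding bJ by simp
    show ?thesis using 1 2 by simp
  qed
  show ?thesis
    apply (rule sum.reindex_bij_witness[where i = ?jj and j = ?i])
    subgoal for a using B[of a] by (rule conjunct1)
    subgoal for a using B[of a] by (rule conjunct2)
    subgoal for b using A[of b] by (rule conjunct1)
    subgoal for b using A[of b] by (rule conjunct2)
    subgoal by (rule refl)
    done
  qed
  finally show ?thesis by simp
qed


lemma col_comp: "(A *v axis i 1) $ r = A $ r $ i"
  by (simp add: matrix_vector_mult_def axis_def if_distrib sum.delta' cong: if_cong)

lemma wedge_comp: "wedge ys $ I = (if card I = length ys then
      (\<Sum>p\<in>{p. p permutes {..<length ys}}. sign p *
         (\<Prod>k<length ys. (ys ! k) $ (sorted_list_of_set I ! p k))) else 0)"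
  unfolding wedge_def by simp

lemma ext_pow_comp: "ext_pow j A w $ I = (\<Sum>J\<in>{J. card J = j}.
       w $ J * wedge (map (\<lambda>i. A *v axis i 1) (sorted_list_of_set J)) $ I)"
  unfolding ext_pow_def by (simp add: sum_component)

lemma wedge_basis:
  fixes J :: "'n::{finite,linorder} set"
  assumes "card J = j" "card I = j"
  shows "wedge (map (\<lambda>i. A *v axis i 1) (sorted_list_of_set J)) $ I
     = Dm A (sorted_list_of_set I) j (\<lambda>k. sorted_list_of_set J ! k)"
  using assms unfolding wedge_comp Dm_def
  by (auto simp: col_comp intro!: sum.cong prod.cong)

lemma ext_pow_wedge:
  fixes xs :: "(real^'n::{finite,linorder}) list"
  shows "ext_pow (length xs) A (wedge xs) = wedge (map (\<lambda>x. A *v x) xs)"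
proof (rule vec_eq_iff[THEN iffD2], rule allI)
  fix I :: "'n set"
  let ?j = "length xs"
  let ?S = "{J::'n set. card J = ?j}"
  show "ext_pow ?j A (wedge xs) $ I = wedge (map (\<lambda>x. A *v x) xs) $ I"
  proof (cases "card I = ?j")
    case False
    have "ext_pow ?j A (wedge xs) $ I = 0"
      unfolding ext_pow_comp using False by (auto intro!: sum.neutral simp: wedge_comp)
    moreover have "wedge (map (\<lambda>x. A *v x) xs) $ I = 0"
      using False by (simp add: wedge_comp)
    ultimately show ?thesis by simp
  next
    case True
    let ?sI = "sorted_list_of_set I"
    let ?P = "{p. p permutes {..<?j}}"
    let ?G = "PiE {..<?j} (\<lambda>_. UNIV::'n set)"
    let ?Gi = "{g\<in>?G. inj_on g {..<?j}}"
    define X where "X g = (\<Prod>k<?j. xs!k $ (g k))" for g :: "nat \<Rightarrow> 'n"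
    define D where "D g = Dm A ?sI ?j g" for g
    have "wedge (map (\<lambda>x. A *v x) xs) $ I =
        (\<Sum>p\<in>?P. sign p * (\<Prod>k<?j. \<Sum>i\<in>UNIV. A$(?sI!p k)$i * xs!k$i))"
      using True by (auto simp: wedge_comp matrix_vector_mult_def intro!: sum.cong prod.cong)
    also have "\<dots> = (\<Sum>p\<in>?P. sign p * (\<Sum>g\<in>?G. \<Prod>k<?j. A$(?sI!p k)$(g k) * xs!k$(g k)))"
      by (subst prod_sum_PiE) auto
    also have "\<dots> = (\<Sum>p\<in>?P. \<Sum>g\<in>?G. X g * (sign p * (\<Prod>k<?j. A$(?sI!p k)$(g k))))"
      by (simp add: sum_distrib_left X_def prod.distrib mult_ac)
    also have "\<dots> = (\<Sum>g\<in>?G. X g * D g)"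
      by (subst sum.swap) (simp add: D_def Dm_def sum_distrib_left)
    also have "\<dots> = (\<Sum>g\<in>?Gi. X g * D g)"
    proof (rule sum.mono_neutral_right)
      show "finite ?G" by (rule finite_PiE) auto
      show "?Gi \<subseteq> ?G" by (rule subsetI) simp
      show "\<forall>g\<in>?G - ?Gi. X g * D g = 0"
      proof
        fix g assume "g \<in> ?G - ?Gi"
        hence "\<not> inj_on g {..<?j}" by simp
        hence "D g = 0" unfolding D_def by (rule Dm_noninj)
        thus "X g * D g = 0" by simp
      qed
    qed
    also have "\<dots> = (\<Sum>J\<in>?S. \<Sum>s\<in>?P.
        X (restrict (\<lambda>k. sorted_list_of_set J ! s k) {..<?j}) * D (restrict (\<lambda>k. sorted_list_of_set J ! s k) {..<?j}))"
      by (rule sum_inj_reindex)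
    also have "\<dots> = (\<Sum>J\<in>?S. \<Sum>s\<in>?P.
        (sign s * (\<Prod>k<?j. xs!k $ (sorted_list_of_set J ! s k))) * D (\<lambda>k. sorted_list_of_set J ! k))"
    proof (intro sum.cong refl)
      fix J s assume s: "s \<in> ?P"
      have "D (restrict (\<lambda>k. sorted_list_of_set J ! s k) {..<?j}) = D ((\<lambda>k. sorted_list_of_set J ! k) \<circ> s)"
        unfolding D_def by (rule Dm_cong) simp
      also have "\<dots> = sign s * D (\<lambda>k. sorted_list_of_set J ! k)"
        unfolding D_def using s by (simp add: Dm_perm)
      finally show "X (restrict (\<lambda>k. sorted_list_of_set J ! s k) {..<?j}) * D (restrict (\<lambda>k. sorted_list_of_set J ! s k) {..<?j})
         = (sign s * (\<Prod>k<?j. xs!k $ (sorted_list_of_set J ! s k))) * D (\<lambda>k. sorted_list_of_set J ! k)"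
        by (simp add: X_def)
    qed
    also have "\<dots> = (\<Sum>J\<in>?S. wedge xs $ J * D (\<lambda>k. sorted_list_of_set J ! k))"
      by (auto simp: wedge_comp sum_distrib_right intro!: sum.cong)
    also have "\<dots> = ext_pow ?j A (wedge xs) $ I"
      unfolding ext_pow_comp D_def using True by (auto simp: wedge_basis intro!: sum.cong)
    finally show ?thesis by simp
  qed
qed


lemma ext_pow_neg: "ext_pow j A (- w) = - ext_pow j A w"
  unfolding ext_pow_def by (simp add: sum_negf[symmetric])

lemma ext_pow_zero: "ext_pow j A 0 = 0"
  unfolding ext_pow_def by simp

lemma inv_left:
  fixes A :: "real^'n^'n"
  assumes "invertible A" obtains B where "\<And>x. B *v (A *v x) = x"
proof -
  obtain B where "B ** A = mat 1" using assms invertible_left_inverse by blast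
  hence "\<And>x. B *v (A *v x) = x" by (simp add: matrix_vector_mul_assoc)
  thus ?thesis using that by blast
qed

lemma wedge_nz:
  fixes xs :: "(real^'n::{finite,linorder}) list" and A :: "real^'n::{finite,linorder}^'n::{finite,linorder}"
  assumes "invertible A" "wedge xs \<noteq> 0"
  shows "wedge (map (\<lambda>x. A *v x) xs) \<noteq> 0"
proof
  assume z: "wedge (map (\<lambda>x. A *v x) xs) = 0"
  obtain B where B: "\<And>x. B *v (A *v x) = x" using inv_left[OF assms(1)] by blast
  have m: "map (\<lambda>x. B *v x) (map (\<lambda>x. A *v x) xs) = xs" by (induct xs) (simp_all add: B)
  have "wedge xs = wedge (map (\<lambda>x. B *v x) (map (\<lambda>x. A *v x) xs))" by (simp only: m)
  also have "\<dots> = ext_pow (length (map (\<lambda>x. A *v x) xs)) B (wedge (map (\<lambda>x. A *v x) xs))"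
    by (rule ext_pow_wedge[symmetric])
  also have "\<dots> = 0" using z by (simp add: ext_pow_zero)
  finally show False using assms(2) by simp
qed

lemma vec_nz:
  fixes A :: "real^'n^'n"
  assumes "invertible A" "x \<noteq> 0" shows "A *v x \<noteq> 0"
proof
  assume z: "A *v x = 0"
  obtain B where B: "\<And>x. B *v (A *v x) = x" using inv_left[OF assms(1)] by blast
  have "x = B *v (A *v x)" by (simp only: B)
  also have "\<dots> = 0" by (simp only: z matrix_vector_mult_0_right)
  finally show False using assms(2) by simp
qed

lemma gsr_pres:
  fixes K :: "nat \<Rightarrow> (real ^ ('n::{finite,linorder} set)) set"
  assumes "GSR K A" "j \<in> {1..CARD('n)}" "w \<in> K j \<union> uminus ` K j"
  shows "ext_pow j A w \<in> K j \<union> uminus ` K j"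
proof -
  obtain e where e: "e j \<in> {-1, 1}" "\<And>u. u \<in> K j \<Longrightarrow> e j *\<^sub>R ext_pow j A u \<in> K j"
    using assms(1,2) unfolding GSR_def K_nonneg_def by blast
  have pos: "ext_pow j A u \<in> K j \<union> uminus ` K j" if u: "u \<in> K j" for u
  proof (cases "e j = 1")
    case True thus ?thesis using e(2)[OF u] by simp
  next
    case False
    hence "e j = -1" using e(1) by auto
    hence "- ext_pow j A u \<in> K j" using e(2)[OF u] by simp
    hence "- (- ext_pow j A u) \<in> uminus ` K j" by blast
    thus ?thesis by simp
  qed
  show ?thesis using assms(3)
  proof
    assume "w \<in> K j" thus ?thesis by (rule pos)
  next
    assume "w \<in> uminus ` K j"
    then obtain u where u: "u \<in> K j" "w = - u" by blast
    have "ext_pow j A w = - ext_pow j A u" using u by (simp add: ext_pow_neg)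
    moreover from pos[OF u(1)] have "- ext_pow j A u \<in> uminus ` K j \<union> K j"
    proof
      assume "ext_pow j A u \<in> K j" thus ?thesis by blast
    next
      assume "ext_pow j A u \<in> uminus ` K j"
      then obtain v where "v \<in> K j" "ext_pow j A u = - v" by blast
      thus ?thesis by simp
    qed
    ultimately show ?thesis by auto
  qed
qed

lemma step:
  fixes K :: "nat \<Rightarrow> (real ^ ('n::{finite,linorder} set)) set"
  assumes "GSR K A" "invertible A" "length (x#xs) \<in> {1..CARD('n)}"
    "wedge (x # xs) \<in> (K (length (x#xs)) \<union> uminus ` K (length (x#xs))) - {0}"
  shows "wedge ((A *v x) # map (\<lambda>x. A *v x) xs) \<in> (K (length (x#xs)) \<union> uminus ` K (length (x#xs))) - {0}"
proof -
  have e: "wedge ((A *v x) # map (\<lambda>x. A *v x) xs) = ext_pow (length (x#xs)) A (wedge (x # xs))"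
    using ext_pow_wedge[of "x#xs" A] by simp
  have nz: "ext_pow (length (x#xs)) A (wedge (x # xs)) \<noteq> 0"
    using wedge_nz[OF assms(2), of "x#xs"] assms(4) e by simp
  show ?thesis unfolding e
    using gsr_pres[OF assms(1,3)] assms(4) nz by blast
qed


lemma That_pres:
  fixes K :: "nat \<Rightarrow> (real ^ ('n::{finite,linorder} set)) set"
    and A :: "real ^ 'n::{finite,linorder} ^ 'n::{finite,linorder}"
  assumes "invertible A" "GSR K A" "j \<in> {1..CARD('n)}"
  shows "(\<lambda>x. A *v x) ` That K j \<subseteq> That K j"
proof
  fix y assume "y \<in> (\<lambda>x. A *v x) ` That K j"
  then obtain x where x: "x \<in> That K j" and y: "y = A *v x" by blast
  show "y \<in> That K j"
  proof (cases "j = 1")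
    case True
    hence "wedge [x] \<in> K 1 \<union> uminus ` K 1" using x by (simp add: That_def)
    hence "ext_pow (length [x]) A (wedge [x]) \<in> K 1 \<union> uminus ` K 1"
      using gsr_pres[OF assms(2), of 1] assms(3) True by simp
    hence "wedge [A *v x] \<in> K 1 \<union> uminus ` K 1" by (simp only: ext_pow_wedge list.map)
    thus ?thesis using True y by (simp add: That_def)
  next
    case False
    show ?thesis
    proof (cases "x = 0")
      case True thus ?thesis using y False by (simp add: That_def)
    next
      case x0: False
      then obtain xs where xs: "length xs = j - 1" "wedge (x # xs) \<in> (K j \<union> uminus ` K j) - {0}"
        using x False by (auto simp: That_def)
      have lj: "length (x # xs) = j" using xs(1) assms(3) by auto
      have "wedge ((A *v x) # map (\<lambda>x. A *v x) xs) \<in> (K j \<union> uminus ` K j) - {0}"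
        using step[OF assms(2,1), of x xs] lj assms(3) xs(2) by simp
      moreover have "length (map (\<lambda>x. A *v x) xs) = j - 1" using xs(1) by simp
      ultimately have "\<exists>xs'. length xs' = j - 1 \<and> wedge (y # xs') \<in> (K j \<union> uminus ` K j) - {0}"
        using y by blast
      thus ?thesis using False unfolding That_def by simp
    qed
  qed
qed

lemma Tseq_pres:
  fixes K :: "nat \<Rightarrow> (real ^ ('n::{finite,linorder} set)) set"
    and A :: "real ^ 'n::{finite,linorder} ^ 'n::{finite,linorder}"
  assumes "invertible A" "GSR K A"
  shows "Suc m \<le> CARD('n) \<Longrightarrow> (\<lambda>x. A *v x) ` Tseq K (Suc m) \<subseteq> Tseq K (Suc m)"
proof (induction m rule: less_induct)
  case (less m)
  show ?case
  proof (cases m)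
    case 0
    thus ?thesis using That_pres[OF assms, of 1] by simp
  next
    case (Suc m')
    let ?K = "K (Suc (Suc m'))"
    define S where "S = {x. \<exists>xs. length xs = Suc m' \<and>
      (\<forall>i<Suc m'. xs ! i \<in> Tseq K (Suc i) - {0}) \<and>
      wedge (x # xs) \<in> (?K \<union> uminus ` ?K) - {0}}"
    have T: "Tseq K (Suc m) = closure S" unfolding S_def Suc by simp
    have AS: "(\<lambda>x. A *v x) ` S \<subseteq> S"
    proof
      fix y assume "y \<in> (\<lambda>x. A *v x) ` S"
      then obtain x where x: "x \<in> S" and y: "y = A *v x" by blast
      then obtain xs where xs: "length xs = Suc m'" "\<forall>i<Suc m'. xs ! i \<in> Tseq K (Suc i) - {0}"
        "wedge (x # xs) \<in> (?K \<union> uminus ` ?K) - {0}" unfolding S_def by blast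
      let ?ys = "map (\<lambda>x. A *v x) xs"
      have "\<forall>i<Suc m'. ?ys ! i \<in> Tseq K (Suc i) - {0}"
      proof (intro allI impI)
        fix i assume i: "i < Suc m'"
        have xi: "xs ! i \<in> Tseq K (Suc i)" "xs ! i \<noteq> 0" using xs(2) i by auto
        have "(\<lambda>x. A *v x) ` Tseq K (Suc i) \<subseteq> Tseq K (Suc i)"
          using less.IH[of i] i Suc less.prems by simp
        hence "A *v (xs ! i) \<in> Tseq K (Suc i)" using xi(1) by blast
        moreover have "A *v (xs ! i) \<noteq> 0" using vec_nz[OF assms(1) xi(2)] .
        ultimately show "?ys ! i \<in> Tseq K (Suc i) - {0}" using i xs(1) by simp
      qed
      moreover have "wedge ((A *v x) # ?ys) \<in> (?K \<union> uminus ` ?K) - {0}"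
        using step[OF assms(2,1), of x xs] xs(1,3) less.prems Suc by simp
      moreover have "length ?ys = Suc m'" using xs(1) by simp
      ultimately show "y \<in> S" unfolding S_def y by blast
    qed
    have "(\<lambda>x. A *v x) ` closure S \<subseteq> closure S"
      by (rule image_closure_subset) (use AS closure_subset in \<open>auto intro: matrix_vector_mult_linear_continuous_on\<close>)
    thus ?thesis using T by simp
  qed
qed

theorem theorem21:
  fixes K :: "nat \<Rightarrow> (real ^ ('n::{finite,linorder} set)) set"
    and A :: "real ^ 'n::{finite,linorder} ^ 'n::{finite,linorder}"
  assumes "TP_structure K"
    and "invertible A"
    and "GSR K A"
  shows "\<forall>j\<in>{1..CARD('n::{finite,linorder})}.
           (\<lambda>x. A *v x) ` That K j \<subseteq> That K j \<and>
           (\<lambda>x. A *v x) ` Tseq K j \<subseteq> Tseq K j"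
proof
  fix j assume j: "j \<in> {1..CARD('n)}"
  then obtain m where m: "j = Suc m" by (cases j) auto
  show "(\<lambda>x. A *v x) ` That K j \<subseteq> That K j \<and> (\<lambda>x. A *v x) ` Tseq K j \<subseteq> Tseq K j"
    using That_pres[OF assms(2,3) j] Tseq_pres[OF assms(2,3), of m] j m by simp
qed

end
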